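(* Let $f=\sum_{J\in\mathbb{N}^n} a_J x^J$ be a nonzero real polynomial with all coefficients $a_J\in\{0,1\}$, let $\mathcal{M}$ be the set of exponent vectors $P$ with $a_P=1$, and fix an integer $k\ge 0$. Let $M$ be the matrix whose rows are indexed by the vectors $I\in\{0,1\}^n$ with $|I|=k$, whose columns are indexed by the finitely many $J\in\mathbb{N}^n$ such that $I+J\in\mathcal{M}$ for some such $I$, and whose entries are $M_{I,J}=a_{I+J}$. Let $B=M^T M$. Then $$\mathrm{Tr}(B^2)\leq |\mathcal{M}|^2\sum_{P \in \mathcal{M}} \binom{\sup(P)}{k}.$$
   Context: For $\alpha\in\mathbb{N}^n$, $x^\alpha = x_1^{\alpha_1}\cdots x_n^{\alpha_n}/(\alpha_1!\cdots\alpha_n!)$ (scaled monomial basis). For $I\in\{0,1\}^n$, $|I|=\sum_i I_i$. For $P\in\mathbb{N}^n$, $\sup(P)$ is the number of indices $i$ with $P_i>0$. *)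

theory Defs
  imports Complex_Main
begin

text \<open>Exponent vectors in N^n, represented as functions nat => nat vanishing outside {0..<n}.\<close>
definition expvecs :: "nat \<Rightarrow> (nat \<Rightarrow> nat) set" where
  "expvecs n = {P. \<forall>i\<ge>n. P i = 0}"

definition rowidx :: "nat \<Rightarrow> nat \<Rightarrow> (nat \<Rightarrow> nat) set" where
  "rowidx n k = {I \<in> expvecs n. (\<forall>i. I i \<le> 1) \<and> (\<Sum>i<n. I i) = k}"

definition colidx :: "nat \<Rightarrow> nat \<Rightarrow> (nat \<Rightarrow> nat) set \<Rightarrow> (nat \<Rightarrow> nat) set" where
  "colidx n k S = {J \<in> expvecs n. \<exists>I\<in>rowidx n k. (\<lambda>i. I i + J i) \<in> S}"

definition supnum :: "nat \<Rightarrow> (nat \<Rightarrow> nat) \<Rightarrow> nat" where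
  "supnum n P = card {i. i < n \<and> P i > 0}"

definition coef01 :: "(nat \<Rightarrow> nat) set \<Rightarrow> (nat \<Rightarrow> nat) \<Rightarrow> real" where
  "coef01 S J = (if J \<in> S then 1 else 0)"

definition Mmat :: "(nat \<Rightarrow> nat) set \<Rightarrow> (nat \<Rightarrow> nat) \<Rightarrow> (nat \<Rightarrow> nat) \<Rightarrow> real" where
  "Mmat S I J = coef01 S (\<lambda>i. I i + J i)"

definition Bmat :: "nat \<Rightarrow> nat \<Rightarrow> (nat \<Rightarrow> nat) set \<Rightarrow> (nat \<Rightarrow> nat) \<Rightarrow> (nat \<Rightarrow> nat) \<Rightarrow> real" where
  "Bmat n k S J J' = (\<Sum>I\<in>rowidx n k. Mmat S I J * Mmat S I J')"

definition trB2 :: "nat \<Rightarrow> nat \<Rightarrow> (nat \<Rightarrow> nat) set \<Rightarrow> real" where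
  "trB2 n k S = (\<Sum>J\<in>colidx n k S. \<Sum>J'\<in>colidx n k S. Bmat n k S J J' * Bmat n k S J' J)"

end

theory Submission
  imports Defs
begin

lemma count_le:
  assumes "P \<in> expvecs n"
  shows "card {I\<in>rowidx n k. \<forall>i. I i \<le> P i} \<le> supnum n P choose k"
proof -
  let ?A = "{i. i<n \<and> P i > 0}"
  let ?T = "{B. B \<subseteq> ?A \<and> card B = k}"
  have finA: "finite ?A" by simp
  have fin: "finite ?T" using finA by (rule finite_subset[rotated, OF finite_Pow_iff[THEN iffD2]]) auto
  have "card {I\<in>rowidx n k. \<forall>i. I i \<le> P i} \<le> card ?T"
  proof (rule card_inj_on_le[where f="\<lambda>I. {i. i<n \<and> I i = 1}"])
    show "inj_on (\<lambda>I. {i. i<n \<and> I i = 1}) {I\<in>rowidx n k. \<forall>i. I i \<le> P i}"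
    proof (rule inj_onI)
      fix I I' assume I: "I \<in> {I\<in>rowidx n k. \<forall>i. I i \<le> P i}" and I': "I' \<in> {I\<in>rowidx n k. \<forall>i. I i \<le> P i}"
        and eq: "{i. i<n \<and> I i = 1} = {i. i<n \<and> I' i = 1}"
      show "I = I'"
      proof
        fix x
        show "I x = I' x"
        proof (cases "x < n")
          case True
          have "I x \<le> 1" "I' x \<le> 1" using I I' by (auto simp: rowidx_def)
          moreover have "I x = 1 \<longleftrightarrow> I' x = 1" using eq True by blast
          ultimately show ?thesis by linarith
        next
          case False
          then show ?thesis using I I' by (auto simp: rowidx_def expvecs_def)
        qed
      qed
    qed
    show "(\<lambda>I. {i. i<n \<and> I i = 1}) ` {I\<in>rowidx n k. \<forall>i. I i \<le> P i} \<subseteq> ?T"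
    proof
      fix B assume "B \<in> (\<lambda>I. {i. i<n \<and> I i = 1}) ` {I\<in>rowidx n k. \<forall>i. I i \<le> P i}"
      then obtain I where I: "I \<in> rowidx n k" "\<forall>i. I i \<le> P i" and B: "B = {i. i<n \<and> I i = 1}" by auto
      have pos: "0 < P i" if "I i = 1" for i using I(2)[rule_format, of i] that by simp
      have sub: "B \<subseteq> ?A" using pos B by auto
      have "(\<Sum>i<n. I i) = (\<Sum>i<n. if I i = 1 then 1 else 0)"
      proof (rule sum.cong)
        fix i show "I i = (if I i = 1 then 1 else 0)" proof -
          have "I i \<le> 1" using I(1) by (simp add: rowidx_def)
          then show ?thesis by (cases "I i = 1") auto
        qed
      qed simp
      also have "\<dots> = card {i\<in>{..<n}. I i = 1}"
        by (simp add: sum.inter_filter[symmetric])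
      also have "{i\<in>{..<n}. I i = 1} = B" using B by auto
      finally have "card B = k" using I(1) by (simp add: rowidx_def)
      then show "B \<in> ?T" using sub by simp
    qed
    show "finite ?T" by (rule fin)
  qed
  also have "card ?T = card ?A choose k" by (rule n_subsets[OF finA])
  finally show ?thesis by (simp add: supnum_def)
qed

theorem lemma3:
  fixes n k :: nat and S :: "(nat \<Rightarrow> nat) set"
  assumes "finite S" and "S \<noteq> {}" and "S \<subseteq> expvecs n"
  shows "trB2 n k S \<le> real (card S) ^ 2 * (\<Sum>P\<in>S. real (supnum n P choose k))"
proof -
  define R where "R = rowidx n k"
  define C where "C = colidx n k S"
  define Q where "Q = Mmat S"
  have Q01: "Q I J = (if (\<lambda>i. I i + J i) \<in> S then 1 else 0)" for I J
    by (simp add: Q_def Mmat_def coef01_def)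
  have Qnn: "0 \<le> Q I J" "Q I J \<le> 1" for I J by (auto simp: Q01)
  have B: "Bmat n k S J J' = (\<Sum>I\<in>R. Q I J * Q I J')" for J J'
    by (simp add: Bmat_def R_def Q_def)
  have RHSnn: "0 \<le> real (card S) ^ 2 * (\<Sum>P\<in>S. real (supnum n P choose k))"
    by (intro mult_nonneg_nonneg sum_nonneg) auto
  show ?thesis
  proof (cases "finite R \<and> finite C")
    case False
    then have "trB2 n k S = 0"
      by (auto simp: trB2_def B C_def)
    then show ?thesis using RHSnn by simp
  next
    case True
    then have fR: "finite R" and fC: "finite C" by auto
    have injJ: "inj_on (\<lambda>J. \<lambda>i. I i + J i) X" for I :: "nat \<Rightarrow> nat" and X :: "(nat \<Rightarrow> nat) set"
      by (auto simp: inj_on_def fun_eq_iff)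
    have injI: "inj_on (\<lambda>I. \<lambda>i. I i + J i) X" for J :: "nat \<Rightarrow> nat" and X :: "(nat \<Rightarrow> nat) set"
      by (auto simp: inj_on_def fun_eq_iff)
    have colsum: "(\<Sum>J\<in>C. Q I J) = real (card {J\<in>C. (\<lambda>i. I i + J i) \<in> S})" for I
      by (simp add: Q01 sum.inter_filter[symmetric, OF fC])
    have colle: "(\<Sum>J\<in>C. Q I J) \<le> real (card S)" for I
    proof -
      have "card {J\<in>C. (\<lambda>i. I i + J i) \<in> S} \<le> card S"
        by (rule card_inj_on_le[OF injJ _ assms(1)]) auto
      then show ?thesis using colsum by simp
    qed
    have rowsum: "(\<Sum>I\<in>R. Q I J) = real (card {I\<in>R. (\<lambda>i. I i + J i) \<in> S})" for J
      by (simp add: Q01 sum.inter_filter[symmetric, OF fR])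
    have Ble: "Bmat n k S J J' \<le> real (card S)" for J J'
    proof -
      have "Bmat n k S J J' \<le> (\<Sum>I\<in>R. Q I J)"
        unfolding B by (rule sum_mono) (use Qnn in \<open>simp add: mult_left_le\<close>)
      also have "\<dots> \<le> real (card S)"
      proof -
        have "card {I\<in>R. (\<lambda>i. I i + J i) \<in> S} \<le> card S"
          by (rule card_inj_on_le[OF injI _ assms(1)]) auto
        then show ?thesis using rowsum by simp
      qed
      finally show ?thesis .
    qed
    have Bnn: "0 \<le> Bmat n k S J J'" for J J'
      unfolding B by (rule sum_nonneg) (simp add: Qnn)
    have Bsym: "Bmat n k S J' J = Bmat n k S J J'" for J J'
      unfolding B by (simp add: mult.commute)
    have "trB2 n k S = (\<Sum>J\<in>C. \<Sum>J'\<in>C. Bmat n k S J J' * Bmat n k S J J')"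
      by (simp add: trB2_def C_def Bsym)
    also have "\<dots> \<le> (\<Sum>J\<in>C. \<Sum>J'\<in>C. real (card S) * Bmat n k S J J')"
      by (intro sum_mono mult_right_mono Ble Bnn)
    also have "\<dots> = real (card S) * (\<Sum>J\<in>C. \<Sum>J'\<in>C. Bmat n k S J J')"
      by (simp add: sum_distrib_left)
    also have "(\<Sum>J\<in>C. \<Sum>J'\<in>C. Bmat n k S J J') = (\<Sum>I\<in>R. (\<Sum>J\<in>C. Q I J) * (\<Sum>J'\<in>C. Q I J'))"
    proof -
      have "(\<Sum>J\<in>C. \<Sum>J'\<in>C. Bmat n k S J J') = (\<Sum>J\<in>C. \<Sum>J'\<in>C. \<Sum>I\<in>R. Q I J * Q I J')"
        by (simp add: B)
      also have "\<dots> = (\<Sum>J\<in>C. \<Sum>I\<in>R. \<Sum>J'\<in>C. Q I J * Q I J')"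
        by (simp add: sum.swap[of _ C R])
      also have "\<dots> = (\<Sum>I\<in>R. \<Sum>J\<in>C. \<Sum>J'\<in>C. Q I J * Q I J')"
        by (rule sum.swap)
      also have "\<dots> = (\<Sum>I\<in>R. (\<Sum>J\<in>C. Q I J) * (\<Sum>J'\<in>C. Q I J'))"
        by (simp add: sum_product)
      finally show ?thesis .
    qed
    also have "(\<Sum>I\<in>R. (\<Sum>J\<in>C. Q I J) * (\<Sum>J'\<in>C. Q I J')) \<le> (\<Sum>I\<in>R. real (card S) * (\<Sum>J\<in>C. Q I J))"
      by (intro sum_mono mult_right_mono colle sum_nonneg) (simp add: Qnn)
    also have "\<dots> = real (card S) * (\<Sum>I\<in>R. \<Sum>J\<in>C. Q I J)"
      by (simp add: sum_distrib_left)
    also have "(\<Sum>I\<in>R. \<Sum>J\<in>C. Q I J) \<le> (\<Sum>P\<in>S. real (supnum n P choose k))"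
    proof -
      have fSig1: "\<forall>I\<in>R. finite {J\<in>C. (\<lambda>i. I i + J i) \<in> S}" using fC by simp
      have fSig2: "\<forall>P\<in>S. finite {I\<in>R. \<forall>i. I i \<le> P i}" using fR by simp
      have "(\<Sum>I\<in>R. \<Sum>J\<in>C. Q I J) = real (card (SIGMA I:R. {J\<in>C. (\<lambda>i. I i + J i) \<in> S}))"
        by (simp add: colsum card_SigmaI[OF fR fSig1])
      also have "card (SIGMA I:R. {J\<in>C. (\<lambda>i. I i + J i) \<in> S}) \<le> card (SIGMA P:S. {I\<in>R. \<forall>i. I i \<le> P i})"
      proof (rule card_inj_on_le[where f="\<lambda>(I,J). ((\<lambda>i. I i + J i), I)"])
        show "inj_on (\<lambda>(I,J). ((\<lambda>i. I i + J i), I)) (SIGMA I:R. {J\<in>C. (\<lambda>i. I i + J i) \<in> S})"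
          by (auto simp: inj_on_def fun_eq_iff)
        show "(\<lambda>(I,J). ((\<lambda>i. I i + J i), I)) ` (SIGMA I:R. {J\<in>C. (\<lambda>i. I i + J i) \<in> S}) \<subseteq> (SIGMA P:S. {I\<in>R. \<forall>i. I i \<le> P i})"
          by auto
        show "finite (SIGMA P:S. {I\<in>R. \<forall>i. I i \<le> P i})"
          using assms(1) fSig2 by (intro finite_SigmaI) auto
      qed
      also have "card (SIGMA P:S. {I\<in>R. \<forall>i. I i \<le> P i}) = (\<Sum>P\<in>S. card {I\<in>R. \<forall>i. I i \<le> P i})"
        by (rule card_SigmaI[OF assms(1) fSig2])
      also have "\<dots> \<le> (\<Sum>P\<in>S. supnum n P choose k)"
        by (rule sum_mono) (use assms(3) count_le in \<open>auto simp: R_def\<close>)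
      finally show ?thesis by (simp add: of_nat_sum[symmetric] del: of_nat_sum)
    qed
    finally show ?thesis by (simp add: power2_eq_square mult.assoc mult_left_mono)
  qed
qed

end
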